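(* Let $\mathsf{G}M_0>0$, $R_0>0$, $\Omega\in\mathbb{R}$ and $R>R_0$. For $\bm{x}=(x^1,x^2,x^3)\in\mathbb{R}^3$ put $r=\|\bm{x}\|$, $\varpi=\sqrt{(x^1)^2+(x^2)^2}$, and let $$\Upsilon(\bm{x})=\mathsf{G}M_0\Big(\frac1r-\frac1R\Big)+\frac{\Omega^2}{2}\varpi^2 .$$ Let $\mathfrak{U}_0$ be the connected component of the open set $\{\bm{x}:\ r>R_0,\ \Upsilon(\bm{x})>0\}$ which contains the shell $\{R_0<r<R\}$, and put $\kappa=\dfrac{\Omega^2R_0^3}{2\mathsf{G}M_0}$. Then the following are equivalent: (i) $\mathfrak{U}_0$ is bounded, i.e. the axially and equatorially symmetric static stationary density $\rho=\big(\frac{\gamma-1}{\mathsf{A}\gamma}\Upsilon\big)^{1/(\gamma-1)}1_{\mathfrak{U}_0}$ (with zero relative velocity, constants $\mathsf{A}>0$, $1<\gamma<2$) is compactly supported, its stratosphere height at the North Pole being $R-R_0$; (ii) $\kappa\le \dfrac{4}{27}\Big(\dfrac{R_0}{R}\Big)^3$.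
   Context: This concerns static stationary solutions ($\bm v=\bm 0$) of the isentropic compressible Euler equations in a frame rotating with constant angular velocity $\Omega$ about the $x^3$-axis, outside the ball $\{r\le R_0\}$, with geopotential $-\mathsf{G}M_0/r-\Omega^2\varpi^2/2$ and pressure $P=\mathsf{A}\rho^\gamma$; for such solutions $\Upsilon=\frac{\mathsf{A}\gamma}{\gamma-1}\rho^{\gamma-1}$ equals $-(\text{geopotential})-\mathsf{G}M_0/R$ where positive. *)

theory Defs
  imports "HOL-Analysis.Analysis"
begin

definition varpi :: "real^3 \<Rightarrow> real" where
  "varpi x = sqrt ((x$1)^2 + (x$2)^2)"

definition Upsilon :: "real \<Rightarrow> real \<Rightarrow> real \<Rightarrow> real^3 \<Rightarrow> real" where
  "Upsilon GM0 \<Omega> R x = GM0 * (1 / norm x - 1 / R) + \<Omega>^2 / 2 * (varpi x)^2"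

definition posRegion :: "real \<Rightarrow> real \<Rightarrow> real \<Rightarrow> real \<Rightarrow> (real^3) set" where
  "posRegion GM0 R0 \<Omega> R = {x. norm x > R0 \<and> Upsilon GM0 \<Omega> R x > 0}"

definition shell :: "real \<Rightarrow> real \<Rightarrow> (real^3) set" where
  "shell R0 R = {x. R0 < norm x \<and> norm x < R}"

definition kappa :: "real \<Rightarrow> real \<Rightarrow> real \<Rightarrow> real" where
  "kappa GM0 R0 \<Omega> = \<Omega>^2 * R0^3 / (2 * GM0)"

end

theory Submission
  imports Defs
begin

lemma norm3_sq: "norm (x::real^3) ^2 = (x$1)^2 + (x$2)^2+(x$3)^2"
  by (simp only: power2_norm_eq_inner) (simp add: inner_vec_def sum_3 power2_eq_square)

lemma varpi_le: "(varpi x)^2 \<le> (norm x)^2"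
  unfolding varpi_def norm3_sq by simp

definition ray :: "real \<Rightarrow> real^3" where "ray t = t *\<^sub>R axis 1 1"

lemma ray_norm: "norm (ray t) = \<bar>t\<bar>"
  by (simp add: ray_def)

lemma ray_varpi: "(varpi (ray t))^2 = t^2"
  by (simp add: ray_def varpi_def axis_def)

lemma cubic: fixes y :: real assumes "y > 0" shows "4*y^3 - 27*y + 27 \<ge> 0"
proof -
  have "4*y^3 - 27*y + 27 = (2 * y - 3)^2*(y+3)" by (simp add: algebra_simps power2_eq_square power3_eq_cube)
  also have "\<dots> \<ge> 0" using assms by simp
  finally show ?thesis .
qed

lemma ray_pos:
  fixes g a R t :: real
  assumes g: "g > 0" and R: "R > 0" and t: "t > 0" and a: "a > 4*g/(27*R^3)"
  shows "g*(1/t - 1/R) + a*t^2 > 0"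
proof -
  define y where "y = t/R"
  have y: "y > 0" using t R by (simp add: y_def)
  have tR: "t = y*R" using R by (simp add: y_def)
  have "a*t^3 > 4*g/(27*R^3) * t^3" using a t by (intro mult_strict_right_mono) auto
  also have "4*g/(27*R^3) * t^3 = 4*g*y^3/27" using R by (simp add: tR power_mult_distrib)
  finally have A: "a*t^3 > 4*g*y^3/27" .
  have "g*(4*y^3 - 27*y + 27) \<ge> 0" using cubic[OF y] g by simp
  hence "g - g*y + 4*g*y^3/27 \<ge> 0" by (simp add: algebra_simps)
  with A have "g - g*y + a*t^3 > 0" by linarith
  hence "(g - g*y + a*t^3)/t > 0" using t by simp
  moreover have "(g - g*y + a*t^3)/t = g*(1/t - 1/R) + a*t^2"
  proof -
    have "g*y = g*t/R" using R by (simp add: y_def)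
    thus ?thesis using t R by (auto simp: field_simps power2_eq_square power3_eq_cube)
  qed
  ultimately show ?thesis by simp
qed

theorem theorem1:
  fixes GM0 R0 \<Omega> R :: real and U0 :: "(real^3) set"
  assumes "GM0 > 0" and "R0 > 0" and "R > R0"
    and "U0 \<in> components (posRegion GM0 R0 \<Omega> R)"
    and "shell R0 R \<subseteq> U0"
  shows "bounded U0 \<longleftrightarrow> kappa GM0 R0 \<Omega> \<le> 4 / 27 * (R0 / R)^3"
proof -
  note g = assms(1) and R0 = assms(2) and RR = assms(3)
  have Rp: "R > 0" using R0 RR by linarith
  have keq: "kappa GM0 R0 \<Omega> \<le> 4 / 27 * (R0 / R)^3 \<longleftrightarrow> \<Omega>^2/2 \<le> 4*GM0/(27*R^3)"
  proof -
    have "kappa GM0 R0 \<Omega> \<le> 4 / 27 * (R0 / R)^3 \<longleftrightarrow> \<Omega>^2 * R0^3 / (2 * GM0) \<le> (4*GM0/(27*R^3)) * R0^3 / GM0"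
      using g Rp by (simp add: kappa_def power_divide)
    also have "\<dots> \<longleftrightarrow> (\<Omega>^2/2 * R0^3) / GM0 \<le> (4*GM0/(27*R^3)) * R0^3 / GM0"
      by (simp add: field_simps)
    also have "\<dots> \<longleftrightarrow> \<Omega>^2/2 * R0^3 \<le> (4*GM0/(27*R^3)) * R0^3"
      using g by (simp only: divide_le_cancel) simp
    also have "\<dots> \<longleftrightarrow> \<Omega>^2/2 \<le> 4*GM0/(27*R^3)"
      using R0 by (intro mult_le_cancel_right_pos) simp
    finally show ?thesis .
  qed
  have conU: "connected U0" using assms(4) in_components_connected by blast
  have subU: "U0 \<subseteq> posRegion GM0 R0 \<Omega> R" using assms(4) in_components_subset by blast
  define m where "m = (R0+R)/2"
  have mS: "ray m \<in> shell R0 R" using R0 RR by (simp add: shell_def ray_norm m_def)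
  hence mU: "ray m \<in> U0" using assms(5) by blast
  show ?thesis
  proof
    assume b: "bounded U0"
    show "kappa GM0 R0 \<Omega> \<le> 4 / 27 * (R0 / R)^3"
    proof (rule ccontr)
      assume "\<not> ?thesis"
      hence a: "\<Omega>^2/2 > 4*GM0/(27*R^3)" using keq by linarith
      define L where "L = ray ` {R0<..}"
      have Lsub: "L \<subseteq> posRegion GM0 R0 \<Omega> R"
      proof
        fix x assume "x \<in> L"
        then obtain t where t: "t > R0" "x = ray t" unfolding L_def by auto
        have "GM0*(1/t - 1/R) + \<Omega>^2/2*t^2 > 0"
          using ray_pos[OF g Rp _ a, of t] t R0 by simp
        thus "x \<in> posRegion GM0 R0 \<Omega> R" using t R0
          by (simp add: posRegion_def Upsilon_def ray_norm ray_varpi)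
      qed
      have "connected L" unfolding L_def ray_def
        by (intro connected_continuous_image continuous_intros) simp
      moreover have "ray m \<in> L" unfolding L_def m_def using RR by auto
      ultimately have "connected (U0 \<union> L)" using conU mU by (intro connected_Un) auto
      hence "U0 \<union> L = U0" using assms(4) Lsub subU mU
        unfolding in_components_maximal by blast
      hence "L \<subseteq> U0" by blast
      hence "bounded L" using b bounded_subset by blast
      then obtain B where B: "\<forall>x\<in>L. norm x \<le> B" unfolding bounded_iff by blast
      have "ray (max R0 B + 1) \<in> L" unfolding L_def by auto
      with B have "norm (ray (max R0 B + 1)) \<le> B" by blast
      thus False using R0 by (simp add: ray_norm)
    qed
  next
    assume "kappa GM0 R0 \<Omega> \<le> 4 / 27 * (R0 / R)^3"
    hence a: "\<Omega>^2/2 \<le> 4*GM0/(27*R^3)" using keq by blast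
    define r1 where "r1 = 3*R/2"
    have r1: "r1 > 0" using Rp by (simp add: r1_def)
    have sph: "U0 \<inter> sphere 0 r1 = {}"
    proof (rule ccontr)
      assume "U0 \<inter> sphere 0 r1 \<noteq> {}"
      then obtain x where x0: "x \<in> U0" "x \<in> sphere 0 r1" by blast
      hence x: "x \<in> U0" "norm x = r1" by auto
      have "\<Omega>^2/2 * (varpi x)^2 \<le> 4*GM0/(27*R^3) * r1^2"
        using varpi_le[of x] x(2) a g Rp by (intro mult_mono) auto
      also have "4*GM0/(27*R^3) * r1^2 = GM0/(3*R)" using Rp
        by (simp add: r1_def field_simps power2_eq_square power3_eq_cube)
      finally have "Upsilon GM0 \<Omega> R x \<le> 0" using Rp
        by (simp add: Upsilon_def x(2) r1_def field_simps)
      moreover have "Upsilon GM0 \<Omega> R x > 0" using x(1) subU by (auto simp: posRegion_def)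
      ultimately show False by linarith
    qed
    have "U0 \<subseteq> ball 0 r1"
    proof (rule ccontr)
      assume "\<not> U0 \<subseteq> ball 0 r1"
      hence "U0 - ball 0 r1 \<noteq> {}" by blast
      moreover have "U0 \<inter> ball 0 r1 \<noteq> {}" using mU RR R0
        by (auto simp: ray_norm m_def r1_def)
      ultimately have "U0 \<inter> frontier (ball 0 r1) \<noteq> {}"
        using connected_Int_frontier conU by blast
      thus False using sph r1 by simp
    qed
    thus "bounded U0" using bounded_ball bounded_subset by blast
  qed
qed

end
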